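(* Let $g$ and $k$ be positive integers, let $G=(A,B;E)$ be a bipartite graph with girth at least $2g$, and let $H$ be a bipartite graph with vertex classes $A$ and $[k]$. Suppose that $H$ contains no cycle $u_1,\ell_1,\dots,u_h,\ell_h$ with $u_1,\dots,u_h\in A$, $\ell_1,\dots,\ell_h\in[k]$ for some $h<g$ such that $u_1,\dots,u_h$ have a common neighbor in $G$. Then $G\otimes_H k$ has girth at least $2g$.
   Context: For a bipartite graph $G=(A,B;E)$ and positive integer $k$, $G\otimes k$ is the bipartite graph with vertex classes $A\times[k]$ and $(B\times[k])\cup A'$, where $A'$ is a disjoint copy of $A$; $(u,i)\in A\times[k]$ and $(v,j)\in B\times[k]$ are adjacent iff $i=j$ and $\{u,v\}\in E$; $(u,i)\in A\times[k]$ and $v\in A'$ are adjacent iff $v$ is the copy of $u$; there are no other edges. For a bipartite graph $H$ with vertex classes $A$ and $[k]$, $G\otimes_H k$ is the induced subgraph of $G\otimes k$ obtained by keeping all vertices of $(B\times[k])\cup A'$ and only those vertices $(u,i)\in A\times[k]$ with $\{u,i\}\in E(H)$. The girth of a graph is the length of its shortest cycle. *)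

theory Defs
  imports Main
begin

text \<open>A bipartite graph G = (A,B;E) with vertex classes A :: 'a set and B :: 'b set and
  edge set E \<subseteq> A \<times> B is viewed as a simple graph on the disjoint union 'a + 'b.\<close>

definition bip_adj :: "('a \<times> 'b) set \<Rightarrow> ('a + 'b) \<Rightarrow> ('a + 'b) \<Rightarrow> bool" where
  "bip_adj E x y \<longleftrightarrow>
     (\<exists>u v. (u, v) \<in> E \<and> ((x = Inl u \<and> y = Inr v) \<or> (x = Inr v \<and> y = Inl u)))"

definition bip_verts :: "'a set \<Rightarrow> 'b set \<Rightarrow> ('a + 'b) set" where
  "bip_verts A B = Inl ` A \<union> Inr ` B"

definition is_cycle :: "'v set \<Rightarrow> ('v \<Rightarrow> 'v \<Rightarrow> bool) \<Rightarrow> 'v list \<Rightarrow> bool" where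
  "is_cycle V adj cs \<longleftrightarrow>
     3 \<le> length cs \<and> distinct cs \<and> set cs \<subseteq> V \<and>
     (\<forall>i < length cs. adj (cs ! i) (cs ! ((i + 1) mod length cs)))"

definition girth_at_least :: "'v set \<Rightarrow> ('v \<Rightarrow> 'v \<Rightarrow> bool) \<Rightarrow> nat \<Rightarrow> bool" where
  "girth_at_least V adj m \<longleftrightarrow> (\<forall>cs. is_cycle V adj cs \<longrightarrow> m \<le> length cs)"

text \<open>The construction G \<otimes> k. First class: A \<times> [k]. Second class: (B \<times> [k]) \<union> A',
  with B \<times> [k] encoded as Inl and the copy A' of A encoded as Inr.\<close>

definition tensor_A :: "'a set \<Rightarrow> nat \<Rightarrow> ('a \<times> nat) set" where
  "tensor_A A k = A \<times> {1..k}"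

definition tensor_B :: "'a set \<Rightarrow> 'b set \<Rightarrow> nat \<Rightarrow> (('b \<times> nat) + 'a) set" where
  "tensor_B A B k = Inl ` (B \<times> {1..k}) \<union> Inr ` A"

definition tensor_E :: "'a set \<Rightarrow> 'b set \<Rightarrow> ('a \<times> 'b) set \<Rightarrow> nat
    \<Rightarrow> (('a \<times> nat) \<times> (('b \<times> nat) + 'a)) set" where
  "tensor_E A B E k =
     {((u, i), Inl (v, j)) | u i v j. u \<in> A \<and> v \<in> B \<and> i \<in> {1..k} \<and> j \<in> {1..k}
                                      \<and> i = j \<and> (u, v) \<in> E}
   \<union> {((u, i), Inr w) | u i w. u \<in> A \<and> i \<in> {1..k} \<and> w = u}"

text \<open>G \<otimes>_H k for H with vertex classes A and [k] (edge set EH \<subseteq> A \<times> [k]): induced subgraph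
  keeping the whole second class and those (u,i) with {u,i} \<in> E(H).\<close>

definition tensorH_A :: "'a set \<Rightarrow> nat \<Rightarrow> ('a \<times> nat) set \<Rightarrow> ('a \<times> nat) set" where
  "tensorH_A A k EH = {x \<in> tensor_A A k. x \<in> EH}"

definition tensorH_E :: "'a set \<Rightarrow> 'b set \<Rightarrow> ('a \<times> 'b) set \<Rightarrow> nat \<Rightarrow> ('a \<times> nat) set
    \<Rightarrow> (('a \<times> nat) \<times> (('b \<times> nat) + 'a)) set" where
  "tensorH_E A B E k EH = {e \<in> tensor_E A B E k. fst e \<in> tensorH_A A k EH}"

end

theory Submission
  imports Defs
begin

lemma succ_distinct:
  "distinct xs \<Longrightarrow> successively (\<lambda>a b. adj a b \<or> a = b) xs \<Longrightarrow> successively adj xs"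
  by (induction "(\<lambda>a b. adj a b \<or> a = b)" xs rule: successively.induct) auto

lemma walk_cycle:
  assumes sym: "\<And>a b. adj a b \<Longrightarrow> adj b a"
    and "xs \<noteq> []" "successively (\<lambda>a b. adj a b \<or> a = b) xs" "x \<notin> set xs"
    "adj x (hd xs)" "adj x (last xs)" "hd xs \<noteq> last xs" "set xs \<subseteq> V" "x \<in> V"
  shows "\<exists>cs. is_cycle V adj cs \<and> length cs \<le> length xs + 1 \<and> set cs \<subseteq> insert x (set xs)"
  using assms(2-)
proof (induction "length xs" arbitrary: xs rule: less_induct)
  case less
  show ?case
  proof (cases "distinct xs")
    case True
    have s: "successively adj (x # xs)"
      using succ_distinct[OF True less.prems(2)] less.prems(1,4)
      by (simp add: successively_Cons)
    have l2: "2 \<le> length xs"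
    proof (rule ccontr)
      assume "\<not> 2 \<le> length xs"
      then have "length xs = 1" using less.prems(1) by (cases xs) (simp_all add: Suc_le_eq)
      then show False using less.prems(6) by (cases xs) auto
    qed
    have "is_cycle V adj (x # xs)"
      unfolding is_cycle_def
    proof (intro conjI allI impI)
      show "3 \<le> length (x # xs)" using l2 by simp
      show "distinct (x # xs)" using True less.prems(3) by simp
      show "set (x # xs) \<subseteq> V" using less.prems(7,8) by simp
      fix i assume i: "i < length (x # xs)"
      show "adj ((x # xs) ! i) ((x # xs) ! ((i + 1) mod length (x # xs)))"
      proof (cases "i = length xs")
        case True
        then have "(x # xs) ! i = last xs" using less.prems(1)
          by (simp add: last_conv_nth)
        then show ?thesis using True sym less.prems(5) by simp
      next
        case False
        then have "Suc i < length (x # xs)" using i by simp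
        then show ?thesis using successively_nth[OF s] by simp
      qed
    qed
    then show ?thesis by auto
  next
    case False
    then obtain ys zs y ws where xs: "xs = ys@[y]@zs@[y]@ws"
      using not_distinct_decomp by blast
    define xs' where "xs' = ys @ [y] @ ws"
    have len: "length xs' < length xs" unfolding xs'_def xs by simp
    have hd: "hd xs' = hd xs" unfolding xs'_def xs by (cases ys) auto
    have lst: "last xs' = last xs" unfolding xs'_def xs by (cases ws) auto
    have sa: "successively (\<lambda>a b. adj a b \<or> a = b) (ys @ [y])"
      using less.prems(2) unfolding xs
      using successively_append_iff[of _ "ys @ [y]" "zs @ [y] @ ws"] by simp
    have sb: "successively (\<lambda>a b. adj a b \<or> a = b) (y # ws)"
      using less.prems(2) unfolding xs
      using successively_append_iff[of _ "ys @ [y] @ zs" "y # ws"] by simp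
    have sw: "successively (\<lambda>a b. adj a b \<or> a = b) xs'"
      unfolding xs'_def using sa sb successively_append_iff[of _ "ys @ [y]" ws]
      by (cases ws) (auto simp: successively_Cons)
    have st: "set xs' \<subseteq> set xs" unfolding xs'_def xs by auto
    have ne: "xs' \<noteq> []" unfolding xs'_def by simp
    have x1: "x \<notin> set xs'" using st less.prems(3) by blast
    have x2: "adj x (hd xs')" using hd less.prems(4) by simp
    have x3: "adj x (last xs')" using lst less.prems(5) by simp
    have x4: "hd xs' \<noteq> last xs'" using hd lst less.prems(6) by simp
    have x5: "set xs' \<subseteq> V" using st less.prems(7) by blast
    obtain cs where "is_cycle V adj cs" "length cs \<le> length xs' + 1" "set cs \<subseteq> insert x (set xs')"
      using less.hyps[OF len ne sw x1 x2 x3 x4 x5 less.prems(8)] by blast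
    then show ?thesis using len st by (intro exI[of _ cs]) auto
  qed
qed

lemma mod_nb: "p < n \<Longrightarrow> 3 \<le> (n::nat) \<Longrightarrow> (p + n - 1) mod n \<noteq> (p+1) mod n \<and> ((p+n-1) mod n + 1) mod n = p"
proof -
  assume a: "p < n" "3 \<le> n"
  consider "p = 0" | "p = n - 1" | "0 < p \<and> p < n - 1" using a by linarith
  then show ?thesis
  proof cases
    case 1
    have e1: "(p + n - 1) mod n = n - 1" using 1 a by (simp add: mod_less)
    have e2: "(p + 1) mod n = 1" using 1 a by (simp add: mod_less)
    have e3: "(n - 1 + 1) mod n = 0" using a by simp
    show ?thesis by (simp only: e1 e2 e3) (use a 1 in auto)
  next
    case 2
    then have eq: "p + n - 1 = (n - 2) + n" using a by simp
    then have "(p + n - 1) mod n = (n - 2) mod n" by (metis mod_add_self2)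
    then have e1: "(p + n - 1) mod n = n - 2" using a by (simp add: mod_less)
    have e2: "(p+1) mod n = 0" using 2 a by simp
    have e3: "(n - 2 + 1) mod n = n - 1" using a by (simp add: mod_less)
    show ?thesis by (simp only: e1 e2 e3) (use a 2 in auto)
  next
    case 3
    then have eq: "p + n - 1 = (p - 1) + n" by simp
    then have "(p + n - 1) mod n = (p - 1) mod n" by (metis mod_add_self2)
    then have e1: "(p + n - 1) mod n = p - 1" using a by (simp add: mod_less)
    have e2: "(p+1) mod n = p + 1" using 3 by (intro mod_less) linarith
    have e3: "(p - 1 + 1) mod n = p" using 3 a by (simp add: mod_less)
    show ?thesis by (simp only: e1 e2 e3) (use a 3 in auto)
  qed
qed

lemma rotate_cycle:
  assumes "is_cycle V adj cs" shows "is_cycle V adj (rotate m cs)"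
  unfolding is_cycle_def
proof (intro conjI allI impI)
  show "3 \<le> length (rotate m cs)" "distinct (rotate m cs)" "set (rotate m cs) \<subseteq> V"
    using assms unfolding is_cycle_def by auto
  fix i assume i: "i < length (rotate m cs)"
  let ?n = "length cs"
  have n: "0 < ?n" using i length_rotate[of m cs] by linarith
  have "adj (cs ! ((m + i) mod ?n)) (cs ! (((m + i) mod ?n + 1) mod ?n))"
    using assms n unfolding is_cycle_def by auto
  moreover have "((m + i) mod ?n + 1) mod ?n = (m + (i + 1) mod ?n) mod ?n"
    by (metis add.assoc mod_add_left_eq mod_add_right_eq)
  ultimately show "adj (rotate m cs ! i) (rotate m cs ! ((i + 1) mod length (rotate m cs)))"
    using i n by (simp add: nth_rotate)
qed

definition pr :: "('a \<times> nat) + (('b \<times> nat) + 'a) \<Rightarrow> 'a + 'b" where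
  "pr x = (case x of Inl (u, i) \<Rightarrow> Inl u | Inr (Inl (v, j)) \<Rightarrow> Inr v | Inr (Inr u) \<Rightarrow> Inl u)"

lemma pr_simps[simp]: "pr (Inl (u,i)) = Inl u" "pr (Inr (Inl (v,j))) = Inr v" "pr (Inr (Inr u)) = Inl u"
  by (simp_all add: pr_def)

lemma pr_Inr: "pr x = Inr v \<longleftrightarrow> (\<exists>j. x = Inr (Inl (v, j)))"
  by (cases x rule: sum.exhaust; auto split: sum.splits simp: pr_def)

primrec lo :: "(nat \<Rightarrow> bool) \<Rightarrow> nat \<Rightarrow> nat" where
  "lo P 0 = 0"
| "lo P (Suc p) = (if P (Suc p) then Suc p else lo P p)"

lemma lo_le: "lo P p \<le> p" by (induction p) auto
lemma lo_P: "P 0 \<Longrightarrow> P (lo P p)" by (induction p) auto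
lemma lo_self: "P p \<Longrightarrow> lo P p = p" by (cases p) auto
lemma lo_gap: "lo P p < j \<Longrightarrow> j \<le> p \<Longrightarrow> \<not> P j"
  by (induction p) (auto split: if_splits simp: le_Suc_eq)

lemma bip_adj_sym: "bip_adj E a b \<Longrightarrow> bip_adj E b a"
  unfolding bip_adj_def by blast

lemma bip_adj_LI: "(u, v) \<in> E \<Longrightarrow> bip_adj E (Inl u) (Inr v)"
  unfolding bip_adj_def by blast
lemma bip_adj_RI: "(u, v) \<in> E \<Longrightarrow> bip_adj E (Inr v) (Inl u)"
  unfolding bip_adj_def by blast

lemma bip_adj_same1[simp]: "\<not> bip_adj E (Inl a) (Inl b)"
  unfolding bip_adj_def by auto
lemma bip_adj_same2[simp]: "\<not> bip_adj E (Inr a) (Inr b)"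
  unfolding bip_adj_def by auto

lemma bip_adj_LR: "bip_adj E (Inl a) (Inr b) \<longleftrightarrow> (a, b) \<in> E"
  "bip_adj E (Inr b) (Inl a) \<longleftrightarrow> (a, b) \<in> E"
  unfolding bip_adj_def by auto

lemma tE_occ: "((u,i), Inl (v,j)) \<in> tensorH_E A B E k EH \<longleftrightarrow>
   i = j \<and> (u,v) \<in> E \<and> (u,i) \<in> EH \<and> u \<in> A \<and> v \<in> B \<and> i \<in> {1..k}"
  unfolding tensorH_E_def tensor_E_def tensorH_A_def tensor_A_def by auto

lemma tE_copy: "((u,i), Inr w) \<in> tensorH_E A B E k EH \<longleftrightarrow>
   w = u \<and> (u,i) \<in> EH \<and> u \<in> A \<and> i \<in> {1..k}"
  unfolding tensorH_E_def tensor_E_def tensorH_A_def tensor_A_def by auto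

lemma adjT_occ:
  assumes "bip_adj (tensorH_E A B E k EH) (Inr (Inl (v,j))) y \<or> bip_adj (tensorH_E A B E k EH) y (Inr (Inl (v,j)))"
  shows "\<exists>u. y = Inl (u,j) \<and> (u,v) \<in> E \<and> (u,j) \<in> EH \<and> u \<in> A \<and> v \<in> B \<and> j \<in> {1..k}"
proof -
  obtain a where y: "y = Inl a" using assms by (cases y) auto
  obtain u i where a: "a = (u,i)" by (cases a)
  show ?thesis using assms unfolding y a bip_adj_LR tE_occ by auto
qed

lemma adjT_copy:
  assumes "bip_adj (tensorH_E A B E k EH) (Inr (Inr w)) (Inl (u,i)) \<or> bip_adj (tensorH_E A B E k EH) (Inl (u,i)) (Inr (Inr w))"
  shows "w = u"
  using assms unfolding bip_adj_LR tE_copy by auto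

lemma adj_pr:
  assumes "bip_adj (tensorH_E A B E k EH) x y"
  shows "bip_adj E (pr x) (pr y) \<or> pr x = pr y"
proof -
  have *: "bip_adj E (pr (Inl (u,i))) (pr (Inr z)) \<or> pr (Inl (u,i)) = pr (Inr z)"
    if "((u,i), z) \<in> tensorH_E A B E k EH" for u i z
  proof (cases z)
    case (Inl b)
    then obtain v j where "b = (v,j)" by (cases b)
    then show ?thesis using that Inl by (auto simp: bip_adj_LR tE_occ)
  next
    case (Inr w)
    then show ?thesis using that by (auto simp: tE_copy)
  qed
  from assms obtain a z where az: "(a, z) \<in> tensorH_E A B E k EH"
    "(x = Inl a \<and> y = Inr z) \<or> (x = Inr z \<and> y = Inl a)"
    unfolding bip_adj_def by blast
  obtain u i where a: "a = (u, i)" by (cases a)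
  have **: "bip_adj E (pr (Inl (u,i))) (pr (Inr z)) \<or> pr (Inl (u,i)) = pr (Inr z)"
    using *[of u i z] az(1) a by blast
  from az(2) show ?thesis
  proof
    assume "x = Inl a \<and> y = Inr z" then show ?thesis using ** a by simp
  next
    assume "x = Inr z \<and> y = Inl a" then show ?thesis using ** a bip_adj_sym by metis
  qed
qed

lemma VT_simps:
  "Inl (u,i) \<in> bip_verts (tensorH_A A k EH) (tensor_B A B k) \<longleftrightarrow> (u,i) \<in> EH \<and> u \<in> A \<and> i \<in> {1..k}"
  "Inr (Inl (v,j)) \<in> bip_verts (tensorH_A A k EH) (tensor_B A B k) \<longleftrightarrow> v \<in> B \<and> j \<in> {1..k}"
  "Inr (Inr u) \<in> bip_verts (tensorH_A A k EH) (tensor_B A B k) \<longleftrightarrow> u \<in> A"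
  unfolding bip_verts_def tensorH_A_def tensor_A_def tensor_B_def by auto

lemma pr_in:
  assumes "x \<in> bip_verts (tensorH_A A k EH) (tensor_B A B k)"
  shows "pr x \<in> bip_verts A B"
  using assms unfolding bip_verts_def tensorH_A_def tensor_A_def tensor_B_def by auto

theorem lemma5p5:
  fixes g k :: nat
    and A :: "'a set" and B :: "'b set" and E :: "('a \<times> 'b) set"
    and EH :: "('a \<times> nat) set"
  assumes "0 < g" and "0 < k"
    and "E \<subseteq> A \<times> B"
    and "EH \<subseteq> A \<times> {1..k}"
    and "girth_at_least (bip_verts A B) (bip_adj E) (2 * g)"
    and "\<And>cs. \<lbrakk> is_cycle (bip_verts A {1..k}) (bip_adj EH) cs; length cs < 2 * g \<rbrakk>
              \<Longrightarrow> \<not> (\<exists>v \<in> B. \<forall>u. Inl u \<in> set cs \<longrightarrow> (u, v) \<in> E)"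
  shows "girth_at_least (bip_verts (tensorH_A A k EH) (tensor_B A B k))
           (bip_adj (tensorH_E A B E k EH)) (2 * g)"
proof -
  let ?V = "bip_verts (tensorH_A A k EH) (tensor_B A B k)"
  let ?T = "tensorH_E A B E k EH"
  have main: False if cyc: "is_cycle ?V (bip_adj ?T) C" and short: "length C < 2 * g" for C
  proof -
    have n0: "3 \<le> length C" and dC: "distinct C"
      and aC: "\<And>i. i < length C \<Longrightarrow> bip_adj ?T (C ! i) (C ! ((i + 1) mod length C))"
      using cyc unfolding is_cycle_def by auto
    have "\<exists>p<length C. \<exists>a. C ! p = Inl a"
    proof (cases "C ! 0")
      case (Inl a) then show ?thesis using n0 by (intro exI[of _ 0]) auto
    next
      case (Inr z)
      have cne: "C \<noteq> []" using n0 by auto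
      have "bip_adj ?T (C ! 0) (C ! 1)" using aC[of 0] n0 cne by simp
      then obtain a where "C ! 1 = Inl a" using Inr by (cases "C ! 1") auto
      then show ?thesis using n0 by (intro exI[of _ 1]) auto
    qed
    then obtain p a where p: "p < length C" "C ! p = Inl a" by blast
    obtain u i where a: "a = (u, i)" by (cases a)
    define p1 where "p1 = (p + 1) mod length C"
    define p2 where "p2 = (p + length C - 1) mod length C"
    have p12: "p2 \<noteq> p1" "(p2 + 1) mod length C = p"
      using mod_nb[OF p(1) n0] unfolding p1_def p2_def by auto
    have lpos: "0 < length C" using n0 by linarith
    have p1l: "p1 < length C" "p2 < length C" using lpos unfolding p1_def p2_def by auto
    have adj1: "bip_adj ?T (Inl (u,i)) (C ! p1)" using aC[OF p(1)] p a unfolding p1_def by simp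
    have adj2: "bip_adj ?T (C ! p2) (Inl (u,i))" using aC[OF p1l(2)] p a p12 by simp
    have "\<exists>q<length C. \<exists>v j. C ! q = Inr (Inl (v, j))"
    proof (rule ccontr)
      assume no: "\<not> ?thesis"
      have c1: "C ! p1 = Inr (Inr u)"
      proof (cases "C ! p1")
        case (Inl x) then show ?thesis using adj1 by simp
      next
        case (Inr z)
        show ?thesis
        proof (cases z)
          case (Inl b) then show ?thesis using no p1l Inr by (cases b) auto
        next
          case (Inr w) then show ?thesis using adjT_copy adj1 \<open>C ! p1 = Inr z\<close> by metis
        qed
      qed
      have c2: "C ! p2 = Inr (Inr u)"
      proof (cases "C ! p2")
        case (Inl x) then show ?thesis using adj2 by simp
      next
        case (Inr z)
        show ?thesis
        proof (cases z)
          case (Inl b) then show ?thesis using no p1l Inr by (cases b) auto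
        next
          case (Inr w) then show ?thesis using adjT_copy adj2 \<open>C ! p2 = Inr z\<close> by metis
        qed
      qed
      have "p1 = p2" using c1 c2 dC p1l nth_eq_iff_index_eq by metis
      then show False using p12 by simp
    qed
    then obtain p0 v l0 where p0: "p0 < length C" "C ! p0 = Inr (Inl (v, l0))" by blast
    define cs where "cs = rotate p0 C"
    define n where "n = length cs"
    have cyc': "is_cycle ?V (bip_adj ?T) cs" unfolding cs_def by (rule rotate_cycle[OF cyc])
    have nC: "n = length C" unfolding n_def cs_def by simp
    have cs0: "cs ! 0 = Inr (Inl (v, l0))" unfolding cs_def using p0 lpos nth_rotate[of 0 C p0] by simp
    have n3: "3 \<le> n" and dcs: "distinct cs" and scs: "set cs \<subseteq> ?V"
      and acs: "\<And>i. i < n \<Longrightarrow> bip_adj ?T (cs ! i) (cs ! ((i + 1) mod n))"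
      using cyc' unfolding is_cycle_def n_def by auto
    have ng: "n < 2 * g" using short nC by simp
    have aS: "bip_adj ?T (cs ! i) (cs ! Suc i)" if "Suc i < n" for i
      using acs[of i] that by simp
    have aL: "bip_adj ?T (cs ! (n - 1)) (cs ! 0)"
      using acs[of "n - 1"] n3 by simp
    have inV: "cs ! i \<in> ?V" if "i < n" for i using scs that n_def nth_mem by blast
    define occ where "occ = (\<lambda>i. \<exists>j. cs ! i = Inr (Inl (v, j)))"
    have occ0: "occ 0" using cs0 occ_def by blast
    have vB: "v \<in> B" and l0k: "l0 \<in> {1..k}" using inV[of 0] n3 cs0 by (auto simp: VT_simps)
    have G: "pr (cs ! p) = pr (cs ! Suc q)"
      if qp: "q < p" "p < n" "occ q" "\<forall>j. q < j \<and> j \<le> p \<longrightarrow> \<not> occ j" "occ (Suc p mod n)" for q p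
    proof (rule ccontr)
      assume ne: "pr (cs ! p) \<noteq> pr (cs ! Suc q)"
      define xs where "xs = map (\<lambda>i. pr (cs ! i)) [Suc q..<Suc p]"
      have lxs: "length xs = p - q" using qp(1) unfolding xs_def by (simp del: upt_Suc)
      have xsn: "xs ! i = pr (cs ! (Suc q + i))" if "i < p - q" for i
        unfolding xs_def using that by (simp del: upt_Suc)
      have xne: "xs \<noteq> []" using lxs qp by auto
      have sxs: "successively (\<lambda>a b. bip_adj E a b \<or> a = b) xs"
        unfolding successively_conv_nth
      proof (intro allI impI)
        fix i assume "Suc i < length xs"
        then have i1: "Suc i < p - q" using lxs by simp
        have "bip_adj ?T (cs ! (Suc q + i)) (cs ! Suc (Suc q + i))"
          using aS[of "Suc q + i"] i1 qp by simp
        then show "bip_adj E (xs ! i) (xs ! Suc i) \<or> xs ! i = xs ! Suc i"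
          using adj_pr xsn[of i] xsn[of "Suc i"] i1 by simp
      qed
      have vnot: "Inr v \<notin> set xs"
      proof
        assume "Inr v \<in> set xs"
        then obtain i where "i \<in> {Suc q..<Suc p}" "pr (cs ! i) = Inr v" unfolding xs_def set_map by (auto simp del: upt_Suc)
        then show False using qp(4) pr_Inr occ_def by (metis atLeastLessThan_iff less_Suc_eq_le Suc_le_eq)
      qed
      have hd: "hd xs = pr (cs ! Suc q)" using xne xsn[of 0] qp by (simp add: hd_conv_nth)
      have lst: "last xs = pr (cs ! p)" using xne xsn[of "p - q - 1"] qp lxs by (simp add: last_conv_nth)
      obtain j where j: "cs ! q = Inr (Inl (v, j))" using qp occ_def by blast
      obtain u where u: "cs ! Suc q = Inl (u, j)" "(u, v) \<in> E"
        using adjT_occ[where v=v and j=j and y="cs ! Suc q" and A=A and B=B and E=E and k=k and EH=EH] aS[of q] qp j by auto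
      obtain j' where j': "cs ! (Suc p mod n) = Inr (Inl (v, j'))" using qp occ_def by blast
      obtain u' where u': "cs ! p = Inl (u', j')" "(u', v) \<in> E"
        using adjT_occ[where v=v and j=j' and y="cs ! p" and A=A and B=B and E=E and k=k and EH=EH] acs[of p] qp j' by auto
      have a1: "bip_adj E (Inr v) (hd xs)" using hd u by (simp add: bip_adj_RI)
      have a2: "bip_adj E (Inr v) (last xs)" using lst u' by (simp add: bip_adj_RI)
      have sV: "set xs \<subseteq> bip_verts A B"
      proof
        fix y assume "y \<in> set xs"
        then obtain i where "i \<in> {Suc q..<Suc p}" "y = pr (cs ! i)"
          unfolding xs_def set_map by (auto simp del: upt_Suc)
        then show "y \<in> bip_verts A B" using pr_in[OF inV[of i]] qp by auto
      qed
      have vV: "Inr v \<in> bip_verts A B" using vB unfolding bip_verts_def by auto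
      obtain cG where cG: "is_cycle (bip_verts A B) (bip_adj E) cG" "length cG \<le> length xs + 1"
        using walk_cycle[of "bip_adj E", OF bip_adj_sym xne sxs vnot a1 a2 _ sV vV] ne hd lst by auto
      have "2 * g \<le> length cG" using assms(5) cG(1) unfolding girth_at_least_def by blast
      then show False using cG(2) lxs qp ng by linarith
    qed
    have F1: "lo occ i < i \<and> (\<exists>u l. cs ! Suc (lo occ i) = Inl (u, l) \<and> (u, v) \<in> E \<and> u \<in> A)"
      if "i < n" "\<not> occ i" for i
    proof -
      have o: "occ (lo occ i)" using lo_P occ0 by metis
      have lt: "lo occ i < i" using lo_le[of occ i] o that by (metis le_neq_implies_less)
      obtain j where j: "cs ! lo occ i = Inr (Inl (v, j))" using o occ_def by blast
      have "bip_adj ?T (cs ! lo occ i) (cs ! Suc (lo occ i))" using aS lt that by simp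
      then show ?thesis using lt adjT_occ[where v=v and j=j and y="cs ! Suc (lo occ i)" and A=A and B=B and E=E and k=k and EH=EH] j by auto
    qed
    define f where "f = ((\<lambda>i. if occ i then Inr (snd (projl (projr (cs ! i))))
                        else Inl (fst (projl (cs ! Suc (lo occ i))))) :: nat \<Rightarrow> 'a + nat)"
    have f_occ: "f i = Inr j" if "cs ! i = Inr (Inl (v, j))" for i j
      using that unfolding f_def occ_def by auto
    have f_non: "\<exists>u l. f i = Inl u \<and> cs ! Suc (lo occ i) = Inl (u, l) \<and> (u, v) \<in> E \<and> u \<in> A"
      if "i < n" "\<not> occ i" for i
      using F1[OF that] that unfolding f_def by auto
    have Step: "bip_adj EH (f i) (f (Suc i)) \<or> f i = f (Suc i)" if i: "Suc i < n" for i
    proof -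
      have ai: "bip_adj ?T (cs ! i) (cs ! Suc i)" using aS i by blast
      consider "occ (Suc i)" | "occ i" | "\<not> occ i \<and> \<not> occ (Suc i)" by blast
      then show ?thesis
      proof cases
        case 1
        then obtain j where cj: "cs ! Suc i = Inr (Inl (v, j))" using occ_def by blast
        then obtain u where u: "cs ! i = Inl (u, j)" "(u, j) \<in> EH"
          using adjT_occ[where v=v and j=j and y="cs ! i" and A=A and B=B and E=E and k=k and EH=EH] ai by auto
        have no: "\<not> occ i" using u occ_def by auto
        obtain u' l where u': "f i = Inl u'" "cs ! Suc (lo occ i) = Inl (u', l)"
          using f_non[OF _ no] i by auto
        have "pr (cs ! i) = pr (cs ! Suc (lo occ i))"
        proof (rule G)
          show "lo occ i < i" using F1[OF _ no] i by simp
          show "i < n" using i by simp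
          show "occ (lo occ i)" using lo_P occ0 by metis
          show "\<forall>j. lo occ i < j \<and> j \<le> i \<longrightarrow> \<not> occ j" using lo_gap by metis
          show "occ (Suc i mod n)" using 1 i by simp
        qed
        then have "u' = u" using u u' by simp
        then show ?thesis using u' u cj f_occ by (simp add: bip_adj_LI)
      next
        case 2
        then obtain j where cj: "cs ! i = Inr (Inl (v, j))" using occ_def by blast
        then obtain u where u: "cs ! Suc i = Inl (u, j)" "(u, j) \<in> EH"
          using adjT_occ[where v=v and j=j and y="cs ! Suc i" and A=A and B=B and E=E and k=k and EH=EH] ai by auto
        have no: "\<not> occ (Suc i)" using u occ_def by auto
        have "lo occ (Suc i) = i" using no 2 lo_self by simp
        then have "f (Suc i) = Inl u" using no u unfolding f_def by simp
        then show ?thesis using f_occ[OF cj] u by (simp add: bip_adj_RI)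
      next
        case 3
        then show ?thesis unfolding f_def by simp
      qed
    qed
    define ys where "ys = map f [1..<n]"
    have lys: "length ys = n - 1" unfolding ys_def by simp
    have ysn: "ys ! i = f (Suc i)" if "i < n - 1" for i unfolding ys_def using that by simp
    have yne: "ys \<noteq> []" using lys n3 by auto
    have sys: "successively (\<lambda>a b. bip_adj EH a b \<or> a = b) ys"
      unfolding successively_conv_nth
    proof (intro allI impI)
      fix i assume "Suc i < length ys"
      then show "bip_adj EH (ys ! i) (ys ! Suc i) \<or> ys ! i = ys ! Suc i"
        using Step[of "Suc i"] ysn[of i] ysn[of "Suc i"] lys by simp
    qed
    have setys: "set ys = f ` {1..<n}" unfolding ys_def by simp
    have lnot: "Inr l0 \<notin> set ys"
    proof
      assume "Inr l0 \<in> set ys"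
      then obtain i where i: "1 \<le> i" "i < n" "f i = Inr l0" using setys by auto
      have oi: "occ i" using f_non[of i] i by auto
      then obtain j where j: "cs ! i = Inr (Inl (v, j))" using occ_def by blast
      then have "j = l0" using f_occ i by simp
      then have "cs ! i = cs ! 0" using j cs0 by simp
      then have "i = 0" using dcs i n3 nth_eq_iff_index_eq n_def by (metis less_le_trans order.strict_trans1 zero_less_numeral)
      then show False using i by simp
    qed
    obtain b1 where b1: "cs ! 1 = Inl (b1, l0)" "(b1, l0) \<in> EH"
      using adjT_occ[where v=v and j=l0 and y="cs ! 1" and A=A and B=B and E=E and k=k and EH=EH] aS[of 0] n3 cs0 by auto
    have no1: "\<not> occ 1" using b1 occ_def by auto
    have "lo occ 1 = 0" using no1 by (simp add: One_nat_def)
    then have f1: "f 1 = Inl b1" using no1 b1 unfolding f_def by simp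
    obtain b2 where b2: "cs ! (n - 1) = Inl (b2, l0)" "(b2, l0) \<in> EH"
      using adjT_occ[where v=v and j=l0 and y="cs ! (n - 1)" and A=A and B=B and E=E and k=k and EH=EH] aL cs0 by auto
    have no2: "\<not> occ (n - 1)" using b2 occ_def by auto
    obtain u' l where u': "f (n - 1) = Inl u'" "cs ! Suc (lo occ (n - 1)) = Inl (u', l)"
      using f_non[OF _ no2] n3 by auto
    have "pr (cs ! (n - 1)) = pr (cs ! Suc (lo occ (n - 1)))"
    proof (rule G)
      show "lo occ (n - 1) < n - 1" using F1[OF _ no2] n3 by simp
      show "n - 1 < n" using n3 by simp
      show "occ (lo occ (n - 1))" using lo_P occ0 by metis
      show "\<forall>j. lo occ (n - 1) < j \<and> j \<le> n - 1 \<longrightarrow> \<not> occ j" using lo_gap by metis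
      show "occ (Suc (n - 1) mod n)" using occ0 n3 by simp
    qed
    then have f2: "f (n - 1) = Inl b2" using u' b2 by simp
    have hd: "hd ys = Inl b1" using yne ysn[of 0] f1 n3 by (simp add: hd_conv_nth)
    have lst: "last ys = Inl b2" using yne ysn[of "n - 2"] f2 n3 lys
      by (simp add: last_conv_nth numeral_2_eq_2 Suc_diff_Suc)
    have "cs ! 1 \<noteq> cs ! (n - 1)" using dcs n3 nth_eq_iff_index_eq n_def by fastforce
    then have b12: "b1 \<noteq> b2" using b1 b2 by auto
    have sV: "set ys \<subseteq> bip_verts A {1..k}"
    proof
      fix y assume "y \<in> set ys"
      then obtain i where i: "1 \<le> i" "i < n" "y = f i" using setys by auto
      show "y \<in> bip_verts A {1..k}"
      proof (cases "occ i")
        case True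
        then obtain j where j: "cs ! i = Inr (Inl (v, j))" using occ_def by blast
        then have "j \<in> {1..k}" using inV[of i] i by (simp add: VT_simps)
        then show ?thesis using f_occ[OF j] i unfolding bip_verts_def by auto
      next
        case False
        then show ?thesis using f_non[of i] i unfolding bip_verts_def by auto
      qed
    qed
    have lV: "Inr l0 \<in> bip_verts A {1..k}" using l0k unfolding bip_verts_def by auto
    obtain cH where cH: "is_cycle (bip_verts A {1..k}) (bip_adj EH) cH" "length cH \<le> length ys + 1"
      "set cH \<subseteq> insert (Inr l0) (set ys)"
      using walk_cycle[of "bip_adj EH", OF bip_adj_sym yne sys lnot _ _ _ sV lV] hd lst b12 b1 b2
      by (auto simp: bip_adj_RI)
    have "length cH < 2 * g" using cH(2) lys ng n3 by linarith
    from assms(6)[OF cH(1) this] have nc: "\<not> (\<exists>v\<in>B. \<forall>u. Inl u \<in> set cH \<longrightarrow> (u, v) \<in> E)" .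
    have "\<forall>u. Inl u \<in> set cH \<longrightarrow> (u, v) \<in> E"
    proof (intro allI impI)
      fix w assume "Inl w \<in> set cH"
      then have "Inl w \<in> set ys" using cH(3) by auto
      then obtain i where i: "1 \<le> i" "i < n" "Inl w = f i" using setys by auto
      have "\<not> occ i" using i f_occ occ_def by (metis sum.distinct(1))
      then show "(w, v) \<in> E" using f_non[of i] i by auto
    qed
    then show False using nc vB by blast
  qed
  show ?thesis unfolding girth_at_least_def using main by (meson not_le)
qed

end
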